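(* If \(A\subseteq\operatorname{Homeo}_+(I)\) is a geometrically fast set of positive bump functions, then there is a geometrically fast set \(B\subseteq\operatorname{Homeo}_+(I)\) of positive bumps with \(A\subseteq B\) such that \(B\) has no isolated elements. Moreover, if \(A\) is finite, then \(B\) can be taken to be finite.
   Context: \(I=[0,1]\), homeomorphisms act on the right. Support \(\operatorname{supt}(f)=\{t: tf\neq t\}\). A left (right) transition point of \(f\) is \(t\notin\operatorname{supt}(f)\) such that \((t,t+\epsilon)\) (resp. \((t-\epsilon,t)\)) meets \(\operatorname{supt}(f)\) for every \(\epsilon>0\); a transition point of a set is one of some element. A positive bump is an element of \(\operatorname{Homeo}_+(I)\) whose support is a single open interval on which \(ta>t\). A set \(A\) of bumps is geometrically proper if no point is a left transition point of two distinct elements, nor a right transition point of two distinct elements. A marking assigns to each \(a\in A\) a marker \(t\in\operatorname{supt}(a)\); for \(a\) with support \((x,y)\) its feet are \(\operatorname{src}(a)=(x,t)\) and \(\operatorname{dest}(a)=[ta,y)\). \(A\) is geometrically fast if it is geometrically proper and has a marking for which all feet of all elements are pairwise disjoint. An element of \(A\) is isolated (in \(A\)) if its support contains no transition point of \(A\). *)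

theory Defs
  imports "HOL-Analysis.Analysis"
begin

text \<open>Elements of Homeo_+(I), I = [0,1], are represented as functions real => real
  (acting on the right: t f is written f t). To get a canonical representative
  we require f to be the identity outside I.\<close>

definition Homeo_plus :: "(real \<Rightarrow> real) set" where
  "Homeo_plus = {f. (\<exists>g. homeomorphism {0..1} {0..1} f g)
                    \<and> strict_mono_on {0..1} f
                    \<and> (\<forall>t. t \<notin> {0..1} \<longrightarrow> f t = t)}"

definition supt :: "(real \<Rightarrow> real) \<Rightarrow> real set" where
  "supt f = {t \<in> {0..1}. f t \<noteq> t}"

definition left_transition_point :: "(real \<Rightarrow> real) \<Rightarrow> real \<Rightarrow> bool" where
  "left_transition_point f t \<longleftrightarrow> t \<notin> supt f \<and>
     (\<forall>\<epsilon>>0. {t<..<t+\<epsilon>} \<inter> supt f \<noteq> {})"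

definition right_transition_point :: "(real \<Rightarrow> real) \<Rightarrow> real \<Rightarrow> bool" where
  "right_transition_point f t \<longleftrightarrow> t \<notin> supt f \<and>
     (\<forall>\<epsilon>>0. {t-\<epsilon><..<t} \<inter> supt f \<noteq> {})"

definition transition_point :: "(real \<Rightarrow> real) \<Rightarrow> real \<Rightarrow> bool" where
  "transition_point f t \<longleftrightarrow> left_transition_point f t \<or> right_transition_point f t"

definition set_transition_point :: "(real \<Rightarrow> real) set \<Rightarrow> real \<Rightarrow> bool" where
  "set_transition_point A t \<longleftrightarrow> (\<exists>f\<in>A. transition_point f t)"

definition positive_bump :: "(real \<Rightarrow> real) \<Rightarrow> bool" where
  "positive_bump f \<longleftrightarrow> f \<in> Homeo_plus \<and>
     (\<exists>x y. x < y \<and> supt f = {x<..<y} \<and> (\<forall>t\<in>{x<..<y}. t < f t))"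

definition geometrically_proper :: "(real \<Rightarrow> real) set \<Rightarrow> bool" where
  "geometrically_proper A \<longleftrightarrow>
     (\<forall>a\<in>A. \<forall>b\<in>A. \<forall>t. left_transition_point a t \<and> left_transition_point b t \<longrightarrow> a = b) \<and>
     (\<forall>a\<in>A. \<forall>b\<in>A. \<forall>t. right_transition_point a t \<and> right_transition_point b t \<longrightarrow> a = b)"

text \<open>For a bump with support (x,y): x = Inf of support, y = Sup of support.\<close>

definition src_foot :: "(real \<Rightarrow> real) \<Rightarrow> real \<Rightarrow> real set" where
  "src_foot a m = {Inf (supt a)<..<m}"

definition dest_foot :: "(real \<Rightarrow> real) \<Rightarrow> real \<Rightarrow> real set" where
  "dest_foot a m = {a m..<Sup (supt a)}"

definition geometrically_fast :: "(real \<Rightarrow> real) set \<Rightarrow> bool" where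
  "geometrically_fast A \<longleftrightarrow> geometrically_proper A \<and>
     (\<exists>mk :: (real \<Rightarrow> real) \<Rightarrow> real.
        (\<forall>a\<in>A. mk a \<in> supt a) \<and>
        (\<forall>a\<in>A. \<forall>b\<in>A.
           (a \<noteq> b \<longrightarrow> src_foot a (mk a) \<inter> src_foot b (mk b) = {}) \<and>
           (a \<noteq> b \<longrightarrow> dest_foot a (mk a) \<inter> dest_foot b (mk b) = {}) \<and>
           src_foot a (mk a) \<inter> dest_foot b (mk b) = {}))"

definition isolated_elem :: "(real \<Rightarrow> real) \<Rightarrow> (real \<Rightarrow> real) set \<Rightarrow> bool" where
  "isolated_elem a A \<longleftrightarrow> a \<in> A \<and> (\<forall>t\<in>supt a. \<not> set_transition_point A t)"

end

theory Submission
  imports Defs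
begin


definition pb :: "real \<Rightarrow> real \<Rightarrow> real \<Rightarrow> real" where
  "pb P h t = t + max 0 (min (2*(t-P)) (2/3*(P+4*h-t)))"

lemma pb_mono: assumes "h > 0" shows "strict_mono (pb P h)"
  unfolding strict_mono_def pb_def using assms by (auto simp: max_def min_def field_simps)

lemma pb_cont: "continuous_on S (pb P h)"
  unfolding pb_def by (intro continuous_intros)

lemma pb_fix: "t \<le> P \<or> t \<ge> P + 4*h \<Longrightarrow> pb P h t = t"
  unfolding pb_def by (auto simp: max_def min_def)

lemma pb_gt: "P < t \<Longrightarrow> t < P + 4*h \<Longrightarrow> pb P h t > t"
  unfolding pb_def by (auto simp: max_def min_def)

lemma pb_mark: "h > 0 \<Longrightarrow> pb P h (P + h) = P + 3*h"
  unfolding pb_def by (auto simp: max_def min_def)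

lemma pb_supt: assumes "0 \<le> P" "P + 4*h \<le> 1" "h > 0"
  shows "supt (pb P h) = {P<..<P+4*h}"
  unfolding supt_def using assms pb_fix[of _ P h] pb_gt[of P _ h]
  by (auto simp: less_le_not_le) (smt (verit))+

lemma pb_homeo: assumes "0 \<le> P" "P + 4*h \<le> 1" "h > 0"
  shows "pb P h \<in> Homeo_plus"
proof -
  have sm: "strict_mono (pb P h)" using pb_mono assms(3) .
  have f0: "pb P h 0 = 0" and f1: "pb P h 1 = 1" using pb_fix assms by auto
  have img: "pb P h ` {0..1} = {0..1}"
  proof
    show "pb P h ` {0..1} \<subseteq> {0..1}"
    proof
      fix y assume "y \<in> pb P h ` {0..1}"
      then obtain x where x: "x \<in> {0..1}" "y = pb P h x" by auto
      have "pb P h 0 \<le> pb P h x" "pb P h x \<le> pb P h 1"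
        using x sm by (auto simp: strict_mono_less_eq)
      then show "y \<in> {0..1}" using f0 f1 x by auto
    qed
  next
    show "{0..1} \<subseteq> pb P h ` {0..1}"
    proof
      fix y :: real assume "y \<in> {0..1}"
      then obtain x where "0 \<le> x" "x \<le> 1" "pb P h x = y"
        using IVT'[of "pb P h" 0 y 1] f0 f1 pb_cont by auto
      then show "y \<in> pb P h ` {0..1}" by force
    qed
  qed
  have inj: "inj_on (pb P h) {0..1}" using sm strict_mono_imp_inj_on by blast
  obtain g where "homeomorphism {0..1} {0..1} (pb P h) g"
    using homeomorphism_compact[OF compact_Icc pb_cont img inj] by blast
  moreover have "strict_mono_on {0..1} (pb P h)" using sm
    by (simp add: strict_mono_def strict_mono_on_def)
  moreover have "\<forall>t. t \<notin> {0..1} \<longrightarrow> pb P h t = t" using pb_fix assms by force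
  ultimately show ?thesis unfolding Homeo_plus_def by blast
qed

lemma pb_bump: assumes "0 \<le> P" "P + 4*h \<le> 1" "h > 0"
  shows "positive_bump (pb P h)"
  unfolding positive_bump_def using pb_homeo[OF assms] pb_supt[OF assms] pb_gt[of P _ h] assms
  by (intro conjI exI[of _ P] exI[of _ "P+4*h"]) auto



lemma bump_ends: assumes "positive_bump f"
  shows "Inf (supt f) < Sup (supt f)" "supt f = {Inf (supt f)<..<Sup (supt f)}"
proof -
  from assms obtain x y where "x < y" "supt f = {x<..<y}" unfolding positive_bump_def by blast
  then show "Inf (supt f) < Sup (supt f)" "supt f = {Inf (supt f)<..<Sup (supt f)}" by auto
qed

lemma supt_sub: "supt f \<subseteq> {0..1}" unfolding supt_def by auto

lemma bump_ends01: assumes "positive_bump f"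
  shows "0 \<le> Inf (supt f)" "Sup (supt f) \<le> 1"
proof -
  from assms obtain x y where xy: "x < y" "supt f = {x<..<y}" unfolding positive_bump_def by blast
  have "(x+y)/2 \<in> supt f" using xy by auto
  have "0 \<le> x"
  proof (rule ccontr)
    assume "\<not> 0 \<le> x"
    define z where "z = min (x / 2) ((x + y)/2)"
    have "z \<in> supt f" using xy `\<not> _` unfolding z_def by (auto simp: min_def)
    moreover have "z < 0" using `\<not> _` unfolding z_def by (auto simp: min_def)
    ultimately show False using supt_sub by fastforce
  qed
  moreover have "y \<le> 1"
  proof (rule ccontr)
    assume "\<not> y \<le> 1"
    define z where "z = max ((y + 1)/2) ((x + y)/2)"
    have "z \<in> supt f" using xy `\<not> _` unfolding z_def by (auto simp: max_def)
    moreover have "z > 1" using `\<not> _` unfolding z_def by (auto simp: max_def)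
    ultimately show False using supt_sub by fastforce
  qed
  ultimately show "0 \<le> Inf (supt f)" "Sup (supt f) \<le> 1" using xy by auto
qed

lemma ltp_iff: assumes "positive_bump f"
  shows "left_transition_point f t \<longleftrightarrow> t = Inf (supt f)"
proof -
  note e = bump_ends[OF assms]
  define x where "x = Inf (supt f)"
  define y where "y = Sup (supt f)"
  have xy: "x < y" "supt f = {x<..<y}" using e unfolding x_def y_def by auto
  show ?thesis unfolding x_def[symmetric]
  proof
    assume l: "left_transition_point f t"
    then have nt: "t \<notin> {x<..<y}" using xy unfolding left_transition_point_def by auto
    show "t = x"
    proof (rule ccontr)
      assume "t \<noteq> x"
      then have "t < x \<or> t \<ge> y" using nt xy by auto
      then show False
      proof
        assume "t < x"
        then have "{t<..<t+(x-t)} \<inter> supt f = {}" using xy by auto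
        moreover have "{t<..<t+(x-t)} \<inter> supt f \<noteq> {}"
          using spec[OF l[unfolded left_transition_point_def, THEN conjunct2], of "x-t"] `t<x`  by simp
        ultimately show False by blast
      next
        assume "t \<ge> y"
        then have "{t<..<t+1} \<inter> supt f = {}" using xy by auto
        moreover have "{t<..<t+1} \<inter> supt f \<noteq> {}"
          using spec[OF l[unfolded left_transition_point_def, THEN conjunct2], of "1"]  by simp
        ultimately show False by blast
      qed
    qed
  next
    assume "t = x"
    show "left_transition_point f t" unfolding left_transition_point_def
    proof (intro conjI allI impI)
      show "t \<notin> supt f" using xy `t = x` by auto
      fix e :: real assume "e > 0"
      have "x + min e (y-x) / 2 \<in> {t<..<t+e} \<inter> supt f"
        using xy `t = x` `e>0` by (auto simp: min_def field_simps)
      then show "{t<..<t+e} \<inter> supt f \<noteq> {}" by blast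
    qed
  qed
qed

lemma rtp_iff: assumes "positive_bump f"
  shows "right_transition_point f t \<longleftrightarrow> t = Sup (supt f)"
proof -
  note e = bump_ends[OF assms]
  define x where "x = Inf (supt f)"
  define y where "y = Sup (supt f)"
  have xy: "x < y" "supt f = {x<..<y}" using e unfolding x_def y_def by auto
  show ?thesis unfolding y_def[symmetric]
  proof
    assume l: "right_transition_point f t"
    then have nt: "t \<notin> {x<..<y}" using xy unfolding right_transition_point_def by auto
    show "t = y"
    proof (rule ccontr)
      assume "t \<noteq> y"
      then have "t > y \<or> t \<le> x" using nt xy by auto
      then show False
      proof
        assume "t > y"
        then have "{t-(t-y)<..<t} \<inter> supt f = {}" using xy by auto
        moreover have "{t-(t-y)<..<t} \<inter> supt f \<noteq> {}"
          using spec[OF l[unfolded right_transition_point_def, THEN conjunct2], of "t-y"] `t>y`  by simp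
        ultimately show False by blast
      next
        assume "t \<le> x"
        then have "{t-1<..<t} \<inter> supt f = {}" using xy by auto
        moreover have "{t-1<..<t} \<inter> supt f \<noteq> {}"
          using spec[OF l[unfolded right_transition_point_def, THEN conjunct2], of "1"]  by simp
        ultimately show False by blast
      qed
    qed
  next
    assume "t = y"
    show "right_transition_point f t" unfolding right_transition_point_def
    proof (intro conjI allI impI)
      show "t \<notin> supt f" using xy `t = y` by auto
      fix e :: real assume "e > 0"
      have "y - min e (y-x) / 2 \<in> {t-e<..<t} \<inter> supt f"
        using xy `t = y` `e>0` by (auto simp: min_def field_simps)
      then show "{t-e<..<t} \<inter> supt f \<noteq> {}" by blast
    qed
  qed
qed

lemma proper_iff: assumes "\<forall>a\<in>B. positive_bump a"
  shows "geometrically_proper B \<longleftrightarrow>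
    (\<forall>a\<in>B. \<forall>b\<in>B. Inf (supt a) = Inf (supt b) \<longrightarrow> a = b) \<and>
    (\<forall>a\<in>B. \<forall>b\<in>B. Sup (supt a) = Sup (supt b) \<longrightarrow> a = b)"
proof -
  have L: "\<And>a t. a \<in> B \<Longrightarrow> left_transition_point a t = (t = Inf (supt a))"
    using assms ltp_iff by blast
  have R: "\<And>a t. a \<in> B \<Longrightarrow> right_transition_point a t = (t = Sup (supt a))"
    using assms rtp_iff by blast
  show ?thesis unfolding geometrically_proper_def by (auto simp: L R)
qed

lemma stp_iff: assumes "\<forall>a\<in>B. positive_bump a"
  shows "set_transition_point B t \<longleftrightarrow> (\<exists>c\<in>B. t = Inf (supt c) \<or> t = Sup (supt c))"
proof -
  have L: "\<And>a t. a \<in> B \<Longrightarrow> left_transition_point a t = (t = Inf (supt a))"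
    using assms ltp_iff by blast
  have R: "\<And>a t. a \<in> B \<Longrightarrow> right_transition_point a t = (t = Sup (supt a))"
    using assms rtp_iff by blast
  show ?thesis unfolding set_transition_point_def transition_point_def by (auto simp: L R)
qed

lemma bump_image_lt: assumes "positive_bump f" "m \<in> supt f"
  shows "m < f m" "f m < Sup (supt f)"
proof -
  from assms(1) obtain x y where xy: "x < y" "supt f = {x<..<y}" "\<forall>t\<in>{x<..<y}. t < f t"
    and H: "f \<in> Homeo_plus" unfolding positive_bump_def by blast
  have y: "Sup (supt f) = y" using xy by simp
  show "m < f m" using xy assms(2) by auto
  have "y \<le> 1" using bump_ends01[OF assms(1)] y by simp
  have "0 \<le> m" using assms(2) supt_sub[of f] by auto
  have "y \<notin> supt f" using xy by auto
  have "m < y" using assms(2) xy by auto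
  then have fy: "f y = y" using `y \<notin> supt f` `y\<le>1` `0 \<le> m` unfolding supt_def by auto
  have "strict_mono_on {0..1} f" using H unfolding Homeo_plus_def by auto
  then have "f m < f y" using `0\<le>m` `y \<le> 1` assms(2) xy
    by (auto simp: strict_mono_on_def)
  then show "f m < Sup (supt f)" using fy y by simp
qed



lemma ioo_disj: fixes p q r s :: real
  assumes "{p<..<q} \<inter> {r<..<s} = {}" "p < q" "r < s" shows "q \<le> r \<or> s \<le> p"
proof (rule ccontr)
  assume "\<not> ?thesis"
  then have "(max p r + min q s)/2 \<in> {p<..<q} \<inter> {r<..<s}" using assms by (auto simp: max_def min_def split: if_splits)
  then show False using assms by blast
qed

lemma ico_disj: fixes p q r s :: real
  assumes "{p..<q} \<inter> {r..<s} = {}" "p < q" "r < s" shows "q \<le> r \<or> s \<le> p"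
proof (rule ccontr)
  assume "\<not> ?thesis"
  then have "max p r \<in> {p..<q} \<inter> {r..<s}" using assms by (auto simp: max_def split: if_splits)
  then show False using assms by blast
qed

lemma pb_facts: assumes "0 \<le> P" "P + 4*h \<le> 1" "h > 0"
  shows "positive_bump (pb P h)" "pb P h \<in> Homeo_plus"
    "Inf (supt (pb P h)) = P" "Sup (supt (pb P h)) = P + 4*h"
    "(3 * Inf (supt (pb P h)) + Sup (supt (pb P h)))/4 = P + h"
    "P + h \<in> supt (pb P h)"
    "src_foot (pb P h) (P + h) = {P<..<P+h}"
    "dest_foot (pb P h) (P + h) = {P+3*h..<P+4*h}"
  using pb_bump[OF assms] pb_homeo[OF assms] pb_supt[OF assms] pb_mark[OF assms(3), of P] assms
  by (auto simp: src_foot_def dest_foot_def)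



theorem proposition3p1:
  assumes "A \<subseteq> Homeo_plus"
    and "\<forall>a\<in>A. positive_bump a"
    and "geometrically_fast A"
  shows "\<exists>B. B \<subseteq> Homeo_plus \<and> (\<forall>b\<in>B. positive_bump b) \<and> geometrically_fast B
             \<and> A \<subseteq> B \<and> (\<forall>b\<in>B. \<not> isolated_elem b B)
             \<and> (finite A \<longrightarrow> finite B)"
proof -
  define L :: "(real \<Rightarrow> real) \<Rightarrow> real" where "L c = Inf (supt c)" for c
  define R :: "(real \<Rightarrow> real) \<Rightarrow> real" where "R c = Sup (supt c)" for c
  have exmk: "\<exists>mk :: (real \<Rightarrow> real) \<Rightarrow> real. (\<forall>a\<in>A. mk a \<in> supt a) \<and> (\<forall>a\<in>A. \<forall>b\<in>A.
           (a \<noteq> b \<longrightarrow> src_foot a (mk a) \<inter> src_foot b (mk b) = {}) \<and>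
           (a \<noteq> b \<longrightarrow> dest_foot a (mk a) \<inter> dest_foot b (mk b) = {}) \<and>
           src_foot a (mk a) \<inter> dest_foot b (mk b) = {})"
    using assms(3) unfolding geometrically_fast_def by (rule conjunct2)
  then obtain mk :: "(real \<Rightarrow> real) \<Rightarrow> real" where mk: "(\<forall>a\<in>A. mk a \<in> supt a) \<and> (\<forall>a\<in>A. \<forall>b\<in>A.
           (a \<noteq> b \<longrightarrow> src_foot a (mk a) \<inter> src_foot b (mk b) = {}) \<and>
           (a \<noteq> b \<longrightarrow> dest_foot a (mk a) \<inter> dest_foot b (mk b) = {}) \<and>
           src_foot a (mk a) \<inter> dest_foot b (mk b) = {})"
    by (rule exE)
  note mk1 = conjunct1[OF mk] and mk2 = conjunct2[OF mk]
  have propA: "\<forall>a\<in>A. \<forall>b\<in>A. L a = L b \<longrightarrow> a = b" "\<forall>a\<in>A. \<forall>b\<in>A. R a = R b \<longrightarrow> a = b"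
    using assms(3) proper_iff[OF assms(2)] unfolding geometrically_fast_def L_def R_def by auto
  have bA: "L c < R c" "supt c = {L c<..<R c}" "0 \<le> L c" "R c \<le> 1" if "c \<in> A" for c
  proof -
    have pb: "positive_bump c" using assms(2) that by auto
    note e = bump_ends[OF pb] bump_ends01[OF pb]
    show "L c < R c" unfolding L_def R_def by (rule e(1))
    show "supt c = {L c<..<R c}" unfolding L_def R_def by (rule e(2))
    show "0 \<le> L c" unfolding L_def by (rule e(3))
    show "R c \<le> 1" unfolding R_def by (rule e(4))
  qed
  have mkA: "L c < mk c" "mk c < c (mk c)" "c (mk c) < R c" if "c \<in> A" for c
    using bA[OF that] mk1 that bump_image_lt[of c "mk c"] assms(2) unfolding R_def by auto
  have feetA: "src_foot c (mk c) = {L c<..<mk c}" "dest_foot c (mk c) = {c (mk c)..<R c}" for c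
    unfolding src_foot_def dest_foot_def L_def R_def by auto
  define Iso where "Iso = {a\<in>A. isolated_elem a A}"
  have isoA: "Iso \<subseteq> A" unfolding Iso_def by auto
  have isoT: "L c \<notin> supt a" "R c \<notin> supt a" if "a \<in> Iso" "c \<in> A" for a c
    using that stp_iff[OF assms(2)] unfolding Iso_def isolated_elem_def L_def R_def by auto
  have iso_disj: "supt a \<inter> supt a' = {}" if "a \<in> Iso" "a' \<in> Iso" "a \<noteq> a'" for a a'
  proof (rule ccontr)
    assume "supt a \<inter> supt a' \<noteq> {}"
    then obtain z where z: "z \<in> supt a" "z \<in> supt a'" by blast
    have A: "a \<in> A" "a' \<in> A" using that isoA by auto
    have "L a = L a'"
      using isoT[of a a'] isoT[of a' a] that A bA[of a] bA[of a'] z by auto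
    then show False using propA A that by auto
  qed
  have iso_feet: "src_foot c (mk c) \<inter> supt a = {} \<and> dest_foot c (mk c) \<inter> supt a = {}"
    if "a \<in> Iso" "c \<in> A" "c \<noteq> a" for a c
  proof -
    have aA: "a \<in> A" using that isoA by auto
    note ba = bA[OF aA] and bc = bA[OF that(2)] and ma = mkA[OF aA] and mc = mkA[OF that(2)]
    show "src_foot c (mk c) \<inter> supt a = {} \<and> dest_foot c (mk c) \<inter> supt a = {}"
    proof (cases "supt c \<inter> supt a = {}")
      case True
      then show ?thesis using ba bc mc feetA[of c] by auto
    next
      case False
      then obtain z where z: "z \<in> supt c" "z \<in> supt a" by blast
      have "L c \<le> L a" "R a \<le> R c" using isoT[OF that(1,2)] ba bc z by auto
      moreover have "L c \<noteq> L a" "R c \<noteq> R a" using propA aA that by auto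
      ultimately have lt: "L c < L a" "R a < R c" by auto
      have "{L c<..<mk c} \<inter> {L a<..<mk a} = {}" using mk2 aA that feetA by metis
      then have "mk c \<le> L a" using ioo_disj[of "L c" "mk c" "L a" "mk a"] lt ma mc by auto
      moreover have "{c (mk c)..<R c} \<inter> {a (mk a)..<R a} = {}" using mk2 aA that feetA by metis
      then have "R a \<le> c (mk c)" using ico_disj[of "c (mk c)" "R c" "a (mk a)" "R a"] lt ma mc by auto
      ultimately show ?thesis using ba feetA[of c] by auto
    qed
  qed

  define hh where "hh a = (a (mk a) - mk a)/8" for a
  define nb where "nb a k = pb (mk a + k * hh a) (hh a)" for a and k :: real
  define K where "K = {1::real, 3}"
  define NB where "NB = (\<lambda>(a,k). nb a k) ` (Iso \<times> K)"
  define B where "B = A \<union> NB"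
  define mk' where "mk' c = (if c \<in> A then mk c else (3 * L c + R c)/4)" for c
  have Kr: "1 \<le> k" "k \<le> 3" if "k \<in> K" for k using that unfolding K_def by auto
  have hpos: "hh a > 0" if "a \<in> Iso" for a using mkA[of a] that isoA unfolding hh_def by auto
  have nbf: "positive_bump (nb a k) \<and> nb a k \<in> Homeo_plus \<and>
     L (nb a k) = mk a + k * hh a \<and> R (nb a k) = mk a + (k+4) * hh a \<and>
     nb a k \<notin> A \<and> mk' (nb a k) = mk a + (k+1) * hh a \<and> mk' (nb a k) \<in> supt (nb a k) \<and>
     src_foot (nb a k) (mk' (nb a k)) = {mk a + k * hh a<..<mk a + (k+1) * hh a} \<and>
     dest_foot (nb a k) (mk' (nb a k)) = {mk a + (k+3) * hh a..<mk a + (k+4) * hh a} \<and>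
     L (nb a k) \<in> supt a \<and> R (nb a k) \<in> supt a"
    if "a \<in> Iso" "k \<in> K" for a k
  proof -
    have aA: "a \<in> A" using that isoA by auto
    define h where "h = hh a"
    define P where "P = mk a + k * h"
    have h8: "a (mk a) = mk a + 8 * h" unfolding h_def hh_def by (simp add: field_simps)
    have hp: "h > 0" using hpos that unfolding h_def by auto
    note ba = bA[OF aA] and ma = mkA[OF aA]
    have kh: "h \<le> k * h" "k * h \<le> 3 * h" using Kr[OF that(2)] hp by auto
    have P0: "0 \<le> P" using ba ma kh hp unfolding P_def by linarith
    have P1: "P + 4 * h \<le> 1" using ba ma kh hp h8 unfolding P_def by linarith
    note pf = pb_facts[OF P0 P1 hp]
    have nbP: "nb a k = pb P h" unfolding nb_def P_def h_def ..
    have LR: "L (nb a k) = P" "R (nb a k) = P + 4 * h" using pf(3,4) unfolding nbP L_def R_def by auto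
    have Lin1: "L (nb a k) \<in> supt a"
      unfolding LR ba(2) greaterThanLessThan_iff P_def using ba(1) ma kh hp h8 by (intro conjI; linarith)
    have Lin2: "R (nb a k) \<in> supt a"
      unfolding LR ba(2) greaterThanLessThan_iff P_def using ba(1) ma kh hp h8 by (intro conjI; linarith)
    note Lin = Lin1 Lin2
    have notA: "nb a k \<notin> A" using isoT[OF that(1)] Lin by auto
    have ring: "(k+1)*h = k*h + h" "(k+3)*h = k*h + 3*h" "(k+4)*h = k*h + 4*h"
      by (auto simp: algebra_simps)
    have mkv: "mk' (nb a k) = P + h" using notA pf(5) unfolding mk'_def L_def R_def nbP by simp
    have e1: "nb a k \<in> Homeo_plus \<and> positive_bump (nb a k)" using pf(1,2) nbP by simp
    have e2: "mk' (nb a k) \<in> supt (nb a k)" using pf(6) mkv nbP by simp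
    have e3: "src_foot (nb a k) (mk' (nb a k)) = {P<..<P+h}" using pf(7) mkv nbP by simp
    have e4: "dest_foot (nb a k) (mk' (nb a k)) = {P+3*h..<P+4*h}" using pf(8) mkv nbP by simp
    have e5: "P + h = mk a + (k+1) * hh a" "P + 3*h = mk a + (k+3) * hh a" "P + 4*h = mk a + (k+4) * hh a"
      "P = mk a + k * hh a"
      unfolding P_def h_def by (auto simp: algebra_simps)
    show ?thesis using e1 e2 e3 e4 LR Lin notA mkv unfolding e5 by (simp add: h_def algebra_simps)
  qed
  have mfeet: "src_foot (nb a k) (mk' (nb a k)) \<subseteq> {mk a<..<a (mk a)}"
              "dest_foot (nb a k) (mk' (nb a k)) \<subseteq> {mk a<..<a (mk a)}"
    if "a \<in> Iso" "k \<in> K" for a k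
  proof -
    have h8: "a (mk a) = mk a + 8 * hh a" unfolding hh_def by (simp add: field_simps)
    have hp: "0 < hh a" using hpos[OF that(1)] .
    have k13: "1 \<le> k" "k \<le> 3" using Kr[OF that(2)] by auto
    have f1: "0 \<le> k * hh a" using hp k13 by simp
    have f2: "(k+1) * hh a \<le> 8 * hh a" using mult_right_mono[of "k+1" 8 "hh a"] hp k13 by simp
    have f3: "(k+4) * hh a \<le> 8 * hh a" using mult_right_mono[of "k+4" 8 "hh a"] hp k13 by simp
    have f4: "0 < (k+3) * hh a" using hp k13 by simp
    note nf = nbf[OF that]
    show "src_foot (nb a k) (mk' (nb a k)) \<subseteq> {mk a<..<a (mk a)}"
    proof
      fix x assume "x \<in> src_foot (nb a k) (mk' (nb a k))"
      then have "mk a + k * hh a < x" "x < mk a + (k+1) * hh a" using nf by auto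
      then show "x \<in> {mk a<..<a (mk a)}" unfolding h8 greaterThanLessThan_iff using f1 f2 by (intro conjI; linarith)
    qed
    show "dest_foot (nb a k) (mk' (nb a k)) \<subseteq> {mk a<..<a (mk a)}"
    proof
      fix x assume "x \<in> dest_foot (nb a k) (mk' (nb a k))"
      then have "mk a + (k+3) * hh a \<le> x" "x < mk a + (k+4) * hh a" using nf by auto
      then show "x \<in> {mk a<..<a (mk a)}" unfolding h8 greaterThanLessThan_iff using f3 f4 by (intro conjI; linarith)
    qed
  qed
  have musub: "{mk a<..<a (mk a)} \<subseteq> supt a" if "a \<in> Iso" for a
    using that isoA bA[of a] mkA[of a] by auto
  have Afeet: "src_foot c (mk c) \<inter> {mk a<..<a (mk a)} = {} \<and> dest_foot c (mk c) \<inter> {mk a<..<a (mk a)} = {}"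
    if "a \<in> Iso" "c \<in> A" for a c
  proof (cases "c = a")
    case True
    then show ?thesis using feetA[of c] by auto
  next
    case False
    then show ?thesis using iso_feet[OF that False] musub[OF that(1)] by blast
  qed
  have nb_eq: "a = a' \<and> k = k'"
    if "a \<in> Iso" "k \<in> K" "a' \<in> Iso" "k' \<in> K" "L (nb a k) = L (nb a' k') \<or> R (nb a k) = R (nb a' k')"
    for a k a' k'
  proof -
    have "a = a'"
    proof (rule ccontr)
      assume "a \<noteq> a'"
      then show False using iso_disj[OF that(1,3)] nbf[OF that(1,2)] nbf[OF that(3,4)] that(5) by auto
    qed
    then show ?thesis using nbf[OF that(1,2)] nbf[OF that(3,4)] that(5) hpos[OF that(1)] by auto
  qed
  have NBE: "\<exists>a k. a \<in> Iso \<and> k \<in> K \<and> c = nb a k" if "c \<in> NB" for c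
    using that unfolding NB_def by auto
  have bB: "\<forall>b\<in>B. positive_bump b" using assms(2) nbf NBE unfolding B_def by blast
  have HB: "B \<subseteq> Homeo_plus" using assms(1) nbf NBE unfolding B_def by blast
  have mkA': "mk' c = mk c" if "c \<in> A" for c using that unfolding mk'_def by simp
  have r: "c = d" if cd: "c \<in> B" "d \<in> B" and eq: "L c = L d \<or> R c = R d" for c d
  proof (cases "c \<in> A")
    case cA: True
    show ?thesis
    proof (cases "d \<in> A")
      case True then show ?thesis using propA cA eq by blast
    next
      case False
      then obtain a k where ak: "a \<in> Iso" "k \<in> K" "d = nb a k" using NBE cd unfolding B_def by blast
      then show ?thesis using nbf[OF ak(1,2)] isoT[OF ak(1) cA] eq by metis
    qed
  next
    case cN: False
    then obtain a k where ak: "a \<in> Iso" "k \<in> K" "c = nb a k" using NBE cd unfolding B_def by blast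
    show ?thesis
    proof (cases "d \<in> A")
      case True then show ?thesis using nbf[OF ak(1,2)] isoT[OF ak(1) True] eq ak(3) by metis
    next
      case False
      then obtain a' k' where "a' \<in> Iso" "k' \<in> K" "d = nb a' k'" using NBE cd unfolding B_def by blast
      then show ?thesis using nb_eq ak eq by blast
    qed
  qed
  have LR_B: "(\<forall>a\<in>B. \<forall>b\<in>B. L a = L b \<longrightarrow> a = b) \<and> (\<forall>a\<in>B. \<forall>b\<in>B. R a = R b \<longrightarrow> a = b)"
    using r by blast
  have propB: "geometrically_proper B" using proper_iff[OF bB] LR_B unfolding L_def R_def by blast
  have mkB: "\<forall>c\<in>B. mk' c \<in> supt c"
  proof
    fix c assume "c \<in> B"
    show "mk' c \<in> supt c"
    proof (cases "c \<in> A")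
      case True then show ?thesis using mk1 mkA' by simp
    next
      case False
      then obtain a k where ak: "a \<in> Iso" "k \<in> K" "c = nb a k" using NBE `c \<in> B` unfolding B_def by blast
      moreover have "mk' (nb a k) \<in> supt (nb a k)" using nbf[OF ak(1,2)] by blast
      ultimately show ?thesis by simp
    qed
  qed
  have Mdisj: "{mk a<..<a (mk a)} \<inter> {mk a'<..<a' (mk a')} = {}" if "a \<in> Iso" "a' \<in> Iso" "a \<noteq> a'" for a a'
    using iso_disj[OF that] musub[OF that(1)] musub[OF that(2)] by blast
  have AN: "src_foot c (mk' c) \<inter> dest_foot d (mk' d) = {} \<and> src_foot d (mk' d) \<inter> dest_foot c (mk' c) = {}
     \<and> src_foot c (mk' c) \<inter> src_foot d (mk' d) = {} \<and> dest_foot c (mk' c) \<inter> dest_foot d (mk' d) = {}"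
    if "c \<in> A" "a \<in> Iso" "k \<in> K" "d = nb a k" for c d a k
    using mfeet[OF that(2,3)] Afeet[OF that(2,1)] unfolding that(4) mkA'[OF that(1)] by blast
  have NN: "(c \<noteq> d \<longrightarrow> src_foot c (mk' c) \<inter> src_foot d (mk' d) = {}) \<and>
            (c \<noteq> d \<longrightarrow> dest_foot c (mk' c) \<inter> dest_foot d (mk' d) = {}) \<and>
            src_foot c (mk' c) \<inter> dest_foot d (mk' d) = {}"
    if ak: "a \<in> Iso" "k \<in> K" "c = nb a k" and ak': "a' \<in> Iso" "k' \<in> K" "d = nb a' k'" for c d a k a' k'
  proof (cases "a = a'")
    case False
    then show ?thesis using mfeet[OF ak(1,2)] mfeet[OF ak'(1,2)] Mdisj[OF ak(1) ak'(1) False]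
      unfolding ak(3) ak'(3) by blast
  next
    case True
    have hp: "0 < hh a" using hpos ak(1) by simp
    note n1 = nbf[OF ak(1,2)] and n2 = nbf[OF ak'(1,2)]
    have kk: "k = 1 \<or> k = 3" "k' = 1 \<or> k' = 3" using ak(2) ak'(2) unfolding K_def by auto
    show ?thesis
      using kk
    proof (elim disjE)
      assume "k = 1" "k' = 1" then show ?thesis using n1 n2 hp ak(3) ak'(3) True by auto
    next
      assume "k = 1" "k' = 3" then show ?thesis using n1 n2 hp ak(3) ak'(3) True by auto
    next
      assume "k = 3" "k' = 1" then show ?thesis using n1 n2 hp ak(3) ak'(3) True by auto
    next
      assume "k = 3" "k' = 3" then show ?thesis using n1 n2 hp ak(3) ak'(3) True by auto
    qed
  qed
  have feetB: "(c \<noteq> d \<longrightarrow> src_foot c (mk' c) \<inter> src_foot d (mk' d) = {}) \<and>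
            (c \<noteq> d \<longrightarrow> dest_foot c (mk' c) \<inter> dest_foot d (mk' d) = {}) \<and>
            src_foot c (mk' c) \<inter> dest_foot d (mk' d) = {}" if cd: "c \<in> B" "d \<in> B" for c d
  proof (cases "c \<in> A")
    case cA: True
    show ?thesis
    proof (cases "d \<in> A")
      case True
      have "(c \<noteq> d \<longrightarrow> src_foot c (mk c) \<inter> src_foot d (mk d) = {}) \<and>
            (c \<noteq> d \<longrightarrow> dest_foot c (mk c) \<inter> dest_foot d (mk d) = {}) \<and>
            src_foot c (mk c) \<inter> dest_foot d (mk d) = {}" using mk2 cA True by blast
      then show ?thesis using mkA'[OF cA] mkA'[OF True] by simp
    next
      case False
      then obtain a k where ak: "a \<in> Iso" "k \<in> K" "d = nb a k" using NBE cd unfolding B_def by blast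
      show ?thesis using AN[OF cA ak] by blast
    qed
  next
    case cN: False
    then obtain a k where ak: "a \<in> Iso" "k \<in> K" "c = nb a k" using NBE cd unfolding B_def by blast
    show ?thesis
    proof (cases "d \<in> A")
      case True
      show ?thesis using AN[OF True ak] by blast
    next
      case False
      then obtain a' k' where ak': "a' \<in> Iso" "k' \<in> K" "d = nb a' k'" using NBE cd unfolding B_def by blast
      show ?thesis using NN[OF ak ak'] .
    qed
  qed
  have fastB: "geometrically_fast B"
    unfolding geometrically_fast_def
    using propB mkB feetB by blast
  have stpB: "set_transition_point B t" if "c \<in> B" "t = L c \<or> t = R c" for c t
    using stp_iff[OF bB] that unfolding L_def R_def by blast
  have suptnb: "supt (nb a k) = {L (nb a k)<..<R (nb a k)}" if "a \<in> Iso" "k \<in> K" for a k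
  proof -
    have "positive_bump (nb a k)" using nbf[OF that] by simp
    from bump_ends(2)[OF this] show ?thesis unfolding L_def R_def .
  qed
  have inB: "nb a k \<in> B" if "a \<in> Iso" "k \<in> K" for a k
    using that unfolding B_def NB_def by blast
  have K1: "1 \<in> K" and K3: "3 \<in> K" unfolding K_def by auto
  have noniso: "\<not> isolated_elem b B" if "b \<in> B" for b
  proof -
    have "\<exists>t\<in>supt b. set_transition_point B t"
    proof (cases "b \<in> A")
      case True
      show ?thesis
      proof (cases "b \<in> Iso")
        case True
        have "L (nb b 1) \<in> supt b" using nbf[OF True K1] by blast
        then show ?thesis using stpB[OF inB[OF True K1]] by blast
      next
        case False
        then obtain t where "t \<in> supt b" "set_transition_point A t"
          using `b \<in> A` unfolding Iso_def isolated_elem_def by auto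
        then show ?thesis unfolding set_transition_point_def B_def by blast
      qed
    next
      case False
      then obtain a k where ak: "a \<in> Iso" "k \<in> K" "b = nb a k" using NBE `b \<in> B` unfolding B_def by blast
      have hp: "0 < hh a" using hpos ak(1) by simp
      have kk: "k = 1 \<or> k = 3" using ak(2) unfolding K_def by auto
      then show ?thesis
      proof
        assume k1: "k = 1"
        have "L (nb a 3) \<in> supt b" unfolding ak(3) suptnb[OF ak(1,2)]
          using nbf[OF ak(1) K3] nbf[OF ak(1,2)] hp k1 by auto
        then show ?thesis using stpB[OF inB[OF ak(1) K3]] by blast
      next
        assume k3: "k = 3"
        have "R (nb a 1) \<in> supt b" unfolding ak(3) suptnb[OF ak(1,2)]
          using nbf[OF ak(1) K1] nbf[OF ak(1,2)] hp k3 by auto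
        then show ?thesis using stpB[OF inB[OF ak(1) K1]] by blast
      qed
    qed
    then show ?thesis unfolding isolated_elem_def by blast
  qed
  have finB: "finite A \<longrightarrow> finite B"
  proof
    assume "finite A"
    then have "finite Iso" using isoA finite_subset by blast
    moreover have "finite K" unfolding K_def by simp
    ultimately have "finite NB" unfolding NB_def by simp
    then show "finite B" using `finite A` unfolding B_def by simp
  qed
  show ?thesis
    apply (rule exI[of _ B])
    using HB bB fastB noniso finB unfolding B_def by blast
qed

end
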